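(* Let $k_0>0$, $L>0$, $\mathbf n\in C^1([0,L],\mathbb{S}^2)$ and $\alpha\in C^1[0,L]$. Define $\mathbf e(t)=R_{\mathbf n(t),\alpha(t)}\mathbf e_3$ for $t\in[0,L]$, where $\mathbf e_3=(0,0,1)^\top$. Let $\mathbf y\in\mathbb{R}^3$ with $\|\mathbf y\|<\sqrt2\,k_0$, and let $t\in[0,L]$. Then there exist $k_1,k_2$ with $(k_1,k_2,t)\in\mathcal U$ and $T_+(k_1,k_2,t)=\mathbf y$ if and only if $$\mathbf y\cdot\mathbf e(t)=-\frac{\|\mathbf y\|^2}{2k_0}.$$ Moreover, $\operatorname{Card}(T_+^{-1}(\mathbf y))$ equals the number of solutions $t\in[0,L]$ of this equation.
   Context: $\mathbb{S}^2$ is the unit sphere in $\mathbb{R}^3$. For a unit vector $\mathbf n$ and angle $\alpha$, $R_{\mathbf n,\alpha}\mathbf y=(1-\cos\alpha)(\mathbf n\cdot\mathbf y)\mathbf n+\cos\alpha\,\mathbf y-\sin\alpha\,(\mathbf n\times\mathbf y)$. $\kappa=\kappa(k_1,k_2)=\sqrt{k_0^2-k_1^2-k_2^2}$. $\mathcal U=\{(k_1,k_2,t)\in\mathbb{R}^3:k_1^2+k_2^2<k_0^2,\ 0\le t\le L\}$, $T_+:\mathcal U\to\mathbb{R}^3$, $T_+(k_1,k_2,t)=R_{\mathbf n(t),\alpha(t)}(k_1,k_2,\kappa-k_0)^\top$, and $\operatorname{Card}(T_+^{-1}(\mathbf y))$ is the number of points of $\mathcal U$ mapped by $T_+$ to $\mathbf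 y$. *)

theory Defs
  imports "HOL-Analysis.Analysis" "HOL-Library.Extended_Nat"
begin

definition C1_on :: "(real \<Rightarrow> 'a::real_normed_vector) \<Rightarrow> real set \<Rightarrow> bool" where
  "C1_on f S \<longleftrightarrow>
     (\<exists>D. (\<forall>x\<in>S. (f has_vector_derivative D x) (at x within S)) \<and> continuous_on S D)"

definition rot :: "real^3 \<Rightarrow> real \<Rightarrow> real^3 \<Rightarrow> real^3" where
  "rot n a y = ((1 - cos a) * (n \<bullet> y)) *\<^sub>R n + cos a *\<^sub>R y - sin a *\<^sub>R cross3 n y"

definition kappa :: "real \<Rightarrow> real \<Rightarrow> real \<Rightarrow> real" where
  "kappa k0 k1 k2 = sqrt (k0\<^sup>2 - k1\<^sup>2 - k2\<^sup>2)"

definition Uset :: "real \<Rightarrow> real \<Rightarrow> (real \<times> real \<times> real) set" where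
  "Uset k0 L = {(k1, k2, t). k1\<^sup>2 + k2\<^sup>2 < k0\<^sup>2 \<and> 0 \<le> t \<and> t \<le> L}"

definition Tplus :: "real \<Rightarrow> (real \<Rightarrow> real^3) \<Rightarrow> (real \<Rightarrow> real) \<Rightarrow> real \<times> real \<times> real \<Rightarrow> real^3" where
  "Tplus k0 n \<alpha> p = (case p of (k1, k2, t) \<Rightarrow>
      rot (n t) (\<alpha> t) (vector [k1, k2, kappa k0 k1 k2 - k0]))"

definition e3 :: "real^3" where "e3 = vector [0, 0, 1]"

definition ecard :: "'a set \<Rightarrow> enat" where
  "ecard A = (if finite A then enat (card A) else \<infinity>)"

end

theory Submission
  imports Defs
begin

lemma n3: "norm (n::real^3) = 1 \<Longrightarrow> (n$1)^2 + (n$2)^2 + (n$3)^2 = 1"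
  unfolding norm_eq_1 by (simp add: inner_vec_def sum_3 power2_eq_square)
lemma cc: "cross3 n (cross3 n x) = (n \<bullet> x) *\<^sub>R n - (n \<bullet> n) *\<^sub>R x"
  by (simp add: cross3_def vec_eq_iff forall_3 inner_vec_def sum_3 vector_3 algebra_simps)
lemma trip: "cross3 n u \<bullet> v = - (u \<bullet> cross3 n v)"
  by (simp add: cross3_def inner_vec_def sum_3 vector_3 algebra_simps)
lemma trip2: "v \<bullet> cross3 n u = - (u \<bullet> cross3 n v)"
  by (simp add: cross3_def inner_vec_def sum_3 vector_3 algebra_simps)
lemma rotA: assumes "norm n = 1" shows "n \<bullet> rot n a x = n \<bullet> x"
proof -
  have "n \<bullet> n = 1" using assms by (simp add: norm_eq_1)
  then show ?thesis unfolding rot_def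
    by (simp add: inner_diff_right inner_add_right dot_cross_self algebra_simps)
qed
lemma rotB: assumes "norm n = 1" shows "cross3 n (rot n a x) = cos a *\<^sub>R cross3 n x - sin a *\<^sub>R ((n \<bullet> x) *\<^sub>R n - x)"
proof -
  have "n \<bullet> n = 1" using assms by (simp add: norm_eq_1)
  then show ?thesis unfolding rot_def
    by (simp add: cross_add_right Cross3.right_diff_distrib cross_mult_right cc)
qed
lemma rot_inv: assumes "norm n = 1" shows "rot n (-a) (rot n a x) = x"
proof -
  have c3: "cos a * (cos a * t) + sin a * (sin a * t) = t" for t
  proof -
    have "cos a * (cos a * t) + sin a * (sin a * t) = (cos a * cos a + sin a * sin a) * t"
      by (simp only: algebra_simps)
    then show ?thesis by (simp only: sin_cos_squared_add3 mult_1)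
  qed
  have "rot n (-a) (rot n a x) = ((1 - cos a) * (n \<bullet> x)) *\<^sub>R n + cos a *\<^sub>R rot n a x + sin a *\<^sub>R cross3 n (rot n a x)"
    unfolding rot_def[of n "-a"] using rotA[OF assms] by simp
  also have "\<dots> = x" unfolding rotB[OF assms] unfolding rot_def
    by (simp add: vec_eq_iff algebra_simps c3)
  finally show ?thesis .
qed
lemma rot_adj: "rot n a u \<bullet> v = u \<bullet> rot n (-a) v"
  unfolding rot_def by (simp add: inner_add_left inner_diff_left inner_add_right inner_diff_right trip) (simp add: inner_commute)
lemma rot_inner: assumes "norm n = 1" shows "rot n a x \<bullet> rot n a z = x \<bullet> z"
  by (simp add: rot_adj rot_inv assms)
lemma e3_inner: "x \<bullet> e3 = x$3"
  by (simp add: e3_def inner_vec_def sum_3 vector_3)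
lemma normsq: "(norm (x::real^3))^2 = (x$1)^2 + (x$2)^2 + (x$3)^2"
  unfolding power2_norm_eq_inner by (simp add: inner_vec_def sum_3 power2_eq_square)
lemma fwd: assumes "k0 > 0" "k1^2 + k2^2 < k0^2" "x = vector [k1, k2, kappa k0 k1 k2 - k0]"
  shows "x \<bullet> e3 = - (norm x)\<^sup>2 / (2*k0)"
proof -
  define K where "K = kappa k0 k1 k2"
  have K2: "K^2 = k0^2 - k1^2 - k2^2" unfolding K_def kappa_def using assms(2) by simp
  have xe: "x \<bullet> e3 = K - k0" using assms(3) by (simp add: e3_inner vector_3 K_def)
  have nx: "(norm x)\<^sup>2 = k1^2 + k2^2 + (K - k0)^2" using assms(3) by (simp add: normsq vector_3 K_def)
  have n2: "(norm x)\<^sup>2 = 2*k0*(k0 - K)" using nx K2 by (simp add: power2_eq_square algebra_simps)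
  show ?thesis using assms(1) unfolding xe n2 by (simp add: field_simps)
qed
lemma bwd: assumes "k0 > 0" "x \<bullet> e3 = - (norm x)\<^sup>2 / (2*k0)" "norm x < sqrt 2 * k0"
  shows "(x$1)^2 + (x$2)^2 < k0^2 \<and> vector [x$1, x$2, kappa k0 (x$1) (x$2) - k0] = x"
proof -
  have N: "(norm x)\<^sup>2 < 2 * k0^2"
  proof -
    have "(norm x)\<^sup>2 < (sqrt 2 * k0)^2" using assms(3) by (simp add: power_strict_mono)
    then show ?thesis by (simp add: power_mult_distrib)
  qed
  have x3: "x$3 = - (norm x)\<^sup>2 / (2*k0)" using assms(2) by (simp add: e3_inner)
  have x3': "2*k0*x$3 = - (norm x)\<^sup>2" using x3 assms(1) by (simp add: field_simps)
  have gt: "x$3 + k0 > 0"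
  proof -
    have "2*k0*x$3 > - 2*k0^2" using x3' N by linarith
    then have "2*k0*(x$3 + k0) > 0" by (simp add: algebra_simps power2_eq_square)
    then show ?thesis using assms(1) by (simp add: zero_less_mult_iff)
  qed
  have eq: "k0^2 - (x$1)^2 - (x$2)^2 = (x$3 + k0)^2" using x3' normsq[of x] by (simp add: algebra_simps power2_eq_square)
  have "kappa k0 (x$1) (x$2) = x$3 + k0" unfolding kappa_def eq using gt by simp
  then have "vector [x$1, x$2, kappa k0 (x$1) (x$2) - k0] = x"
    by (simp add: vec_eq_iff forall_3 vector_3)
  moreover have "(x$1)^2 + (x$2)^2 < k0^2" using eq gt
    by (smt (verit) zero_less_power)
  ultimately show ?thesis by simp
qed

theorem proposition4p6:
  fixes k0 L :: real and n :: "real \<Rightarrow> real^3" and \<alpha> :: "real \<Rightarrow> real"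
    and e :: "real \<Rightarrow> real^3" and y :: "real^3"
  assumes "k0 > 0" and "L > 0"
    and "C1_on n {0..L}" and "\<forall>t\<in>{0..L}. norm (n t) = 1"
    and "C1_on \<alpha> {0..L}"
    and "\<forall>t\<in>{0..L}. e t = rot (n t) (\<alpha> t) e3"
    and "norm y < sqrt 2 * k0"
  shows "(\<forall>t\<in>{0..L}.
            (\<exists>k1 k2. (k1, k2, t) \<in> Uset k0 L \<and> Tplus k0 n \<alpha> (k1, k2, t) = y)
              \<longleftrightarrow> y \<bullet> e t = - (norm y)\<^sup>2 / (2 * k0))
         \<and> ecard {p \<in> Uset k0 L. Tplus k0 n \<alpha> p = y}
             = ecard {t \<in> {0..L}. y \<bullet> e t = - (norm y)\<^sup>2 / (2 * k0)}"
proof -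
  have P1: "(\<exists>k1 k2. (k1, k2, t) \<in> Uset k0 L \<and> Tplus k0 n \<alpha> (k1, k2, t) = y)
              \<longleftrightarrow> y \<bullet> e t = - (norm y)\<^sup>2 / (2 * k0)" if t: "t \<in> {0..L}" for t
  proof
    have nt: "norm (n t) = 1" and et: "e t = rot (n t) (\<alpha> t) e3" using assms t by auto
    assume "\<exists>k1 k2. (k1, k2, t) \<in> Uset k0 L \<and> Tplus k0 n \<alpha> (k1, k2, t) = y"
    then obtain k1 k2 where k: "k1^2 + k2^2 < k0^2" and y: "rot (n t) (\<alpha> t) (vector [k1, k2, kappa k0 k1 k2 - k0]) = y"
      by (auto simp: Uset_def Tplus_def)
    define x where "x = (vector [k1, k2, kappa k0 k1 k2 - k0] :: real^3)"
    have fx: "x \<bullet> e3 = - (norm x)\<^sup>2 / (2*k0)" using fwd[OF assms(1) k] x_def by simp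
    have "y \<bullet> e t = rot (n t) (\<alpha> t) x \<bullet> rot (n t) (\<alpha> t) e3" using y et x_def by simp
    also have "\<dots> = x \<bullet> e3" by (rule rot_inner[OF nt])
    finally have "y \<bullet> e t = x \<bullet> e3" .
    moreover have "(norm y)\<^sup>2 = (norm x)\<^sup>2" unfolding power2_norm_eq_inner
      using rot_inner[OF nt, of "\<alpha> t" x x] y x_def by simp
    ultimately show "y \<bullet> e t = - (norm y)\<^sup>2 / (2 * k0)" using fx by simp
  next
    have nt: "norm (n t) = 1" and et: "e t = rot (n t) (\<alpha> t) e3" using assms t by auto
    assume h: "y \<bullet> e t = - (norm y)\<^sup>2 / (2 * k0)"
    define x where "x = rot (n t) (- \<alpha> t) y"
    have Rx: "rot (n t) (\<alpha> t) x = y" using rot_inv[OF nt, of "- \<alpha> t"] x_def by simp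
    have xe: "x \<bullet> e3 = y \<bullet> e t" using Rx et rot_inner[OF nt, of "\<alpha> t" x e3] by simp
    have nx: "(norm y)\<^sup>2 = (norm x)\<^sup>2" unfolding power2_norm_eq_inner
      using Rx rot_inner[OF nt, of "\<alpha> t" x x] by simp
    have nxy: "norm x = norm y" using nx by (simp add: power2_eq_iff_nonneg)
    have hx: "x \<bullet> e3 = - (norm x)\<^sup>2 / (2*k0)" "norm x < sqrt 2 * k0"
      unfolding nxy xe by (rule h, rule assms(7))
    from bwd[OF assms(1) hx] have b: "(x$1)^2 + (x$2)^2 < k0^2" "vector [x$1, x$2, kappa k0 (x$1) (x$2) - k0] = x" by auto
    show "\<exists>k1 k2. (k1, k2, t) \<in> Uset k0 L \<and> Tplus k0 n \<alpha> (k1, k2, t) = y"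
      using b t Rx by (intro exI[of _ "x$1"] exI[of _ "x$2"]) (auto simp: Uset_def Tplus_def)
  qed
  define P where "P = {p \<in> Uset k0 L. Tplus k0 n \<alpha> p = y}"
  define S where "S = {t \<in> {0..L}. y \<bullet> e t = - (norm y)\<^sup>2 / (2 * k0)}"
  have bij: "bij_betw (\<lambda>p. snd (snd p)) P S"
    unfolding bij_betw_def
  proof
    show "inj_on (\<lambda>p. snd (snd p)) P"
    proof (rule inj_onI)
      fix p q assume p: "p \<in> P" and q: "q \<in> P" and eq: "snd (snd p) = snd (snd q)"
      obtain a b t where pp: "p = (a, b, t)" by (cases p) auto
      obtain a' b' t' where qq: "q = (a', b', t')" by (cases q) auto
      have tt: "t' = t" using eq pp qq by simp
      have t: "t \<in> {0..L}" using p pp by (auto simp: P_def Uset_def)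
      have nt: "norm (n t) = 1" using assms t by auto
      have "rot (n t) (\<alpha> t) (vector [a, b, kappa k0 a b - k0]) = rot (n t) (\<alpha> t) (vector [a', b', kappa k0 a' b' - k0])"
        using p q pp qq tt by (simp add: P_def Tplus_def)
      then have "rot (n t) (- \<alpha> t) (rot (n t) (\<alpha> t) (vector [a, b, kappa k0 a b - k0])) = rot (n t) (- \<alpha> t) (rot (n t) (\<alpha> t) (vector [a', b', kappa k0 a' b' - k0]))"
        by simp
      then have "(vector [a, b, kappa k0 a b - k0] :: real^3) = vector [a', b', kappa k0 a' b' - k0]"
        unfolding rot_inv[OF nt] .
      then have "a = a'" "b = b'" by (metis vector_3(1), metis vector_3(2))
      then show "p = q" using pp qq tt by simp
    qed
  next
    show "(\<lambda>p. snd (snd p)) ` P = S"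
    proof
      show "(\<lambda>p. snd (snd p)) ` P \<subseteq> S"
      proof
        fix t assume "t \<in> (\<lambda>p. snd (snd p)) ` P"
        then obtain a b where ab: "(a, b, t) \<in> P" by force
        then have t: "t \<in> {0..L}" by (auto simp: P_def Uset_def)
        then show "t \<in> S" using P1[OF t] ab by (auto simp: P_def S_def)
      qed
    next
      show "S \<subseteq> (\<lambda>p. snd (snd p)) ` P"
      proof
        fix t assume "t \<in> S"
        then have t: "t \<in> {0..L}" and h: "y \<bullet> e t = - (norm y)\<^sup>2 / (2 * k0)" by (auto simp: S_def)
        then obtain a b where "(a, b, t) \<in> Uset k0 L \<and> Tplus k0 n \<alpha> (a, b, t) = y" using P1[OF t] by blast
        then have "(a, b, t) \<in> P" by (simp add: P_def)
        then show "t \<in> (\<lambda>p. snd (snd p)) ` P" by force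
      qed
    qed
  qed
  have "ecard P = ecard S"
    unfolding ecard_def using bij_betw_finite[OF bij] bij_betw_same_card[OF bij] by simp
  then show ?thesis using P1 unfolding P_def S_def by blast
qed
end
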